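(* Let $\mathbb{X}\subseteq\mathbb{P}^2$ be a $\Bbbk$-configuration of type $(1,2,\dots,s)$ with $s\ge2$. Then there are at most $s+1$ lines in $\mathbb{P}^2$ that contain $s$ points of $\mathbb{X}$.
   Context: $\Bbbk$ is an algebraically closed field. A $\Bbbk$-configuration of type $(d_1,\dots,d_s)$ is a finite set $\mathbb{X}\subseteq\mathbb{P}^2$ for which there exist integers $1\le d_1<\cdots<d_s$, subsets $\mathbb{X}_1,\dots,\mathbb{X}_s$ of $\mathbb{X}$ and distinct lines $\mathbb{L}_1,\dots,\mathbb{L}_s\subseteq\mathbb{P}^2$ such that (1) $\mathbb{X}=\bigcup_{i=1}^s\mathbb{X}_i$; (2) $|\mathbb{X}_i|=d_i$ and $\mathbb{X}_i\subseteq\mathbb{L}_i$ for each $i$; (3) for $1<i\le s$, $\mathbb{L}_i$ contains no point of $\mathbb{X}_j$ for any $j<i$. *)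

theory Defs
  imports "HOL-Computational_Algebra.Polynomial"
begin

definition proj_class :: "'k::field \<times> 'k \<times> 'k \<Rightarrow> ('k \<times> 'k \<times> 'k) set" where
  "proj_class v = (case v of (a, b, d) \<Rightarrow> {(c * a, c * b, c * d) | c. c \<noteq> 0})"

definition P2 :: "('k::field \<times> 'k \<times> 'k) set set" where
  "P2 = {proj_class v | v. v \<noteq> (0, 0, 0)}"

definition proj_line :: "'k::field \<times> 'k \<times> 'k \<Rightarrow> ('k \<times> 'k \<times> 'k) set set" where
  "proj_line n = (case n of (u, v, w) \<Rightarrow>
     {p \<in> P2. \<forall>(x, y, z) \<in> p. u * x + v * y + w * z = 0})"

definition lines_P2 :: "('k::field \<times> 'k \<times> 'k) set set set" where
  "lines_P2 = {proj_line n | n. n \<noteq> (0, 0, 0)}"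

text \<open>k-configuration of type ds = [d_1,...,d_s] (0-indexed here).\<close>

definition k_configuration ::
  "('k::field \<times> 'k \<times> 'k) set set \<Rightarrow> nat list \<Rightarrow> bool" where
  "k_configuration X ds \<longleftrightarrow>
     X \<subseteq> P2 \<and> finite X \<and> ds \<noteq> [] \<and> sorted_wrt (<) ds \<and> (\<forall>d \<in> set ds. 1 \<le> d) \<and>
     (\<exists>Xs Ls.
        X = (\<Union>i < length ds. Xs i) \<and>
        (\<forall>i < length ds. card (Xs i) = ds ! i \<and> Xs i \<subseteq> Ls i \<and> Ls i \<in> lines_P2) \<and>
        inj_on Ls {..< length ds} \<and>
        (\<forall>i < length ds. \<forall>j < i. Ls i \<inter> Xs j = {}))"

end

theory Submission
  imports Defs
begin
lemma key:
  fixes a1 a2 a3 b1 b2 b3 u v w p q r x y z :: "'k::field"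
  assumes "u*a1+v*a2+w*a3 = 0" "u*b1+v*b2+w*b3 = 0" "u*x+v*y+w*z = 0"
   "p*a1+q*a2+r*a3 = 0" "p*b1+q*b2+r*b3 = 0"
  shows "(a2*b3 - a3*b2) * u * (p*x+q*y+r*z) = 0"
    "(a2*b3 - a3*b2) * v * (p*x+q*y+r*z) = 0"
    "(a2*b3 - a3*b2) * w * (p*x+q*y+r*z) = 0"
    "(a3*b1 - a1*b3) * u * (p*x+q*y+r*z) = 0"
    "(a3*b1 - a1*b3) * v * (p*x+q*y+r*z) = 0"
    "(a3*b1 - a1*b3) * w * (p*x+q*y+r*z) = 0"
    "(a1*b2 - a2*b1) * u * (p*x+q*y+r*z) = 0"
    "(a1*b2 - a2*b1) * v * (p*x+q*y+r*z) = 0"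
    "(a1*b2 - a2*b1) * w * (p*x+q*y+r*z) = 0"
  using assms by algebra+

lemma key2:
  fixes a1 a2 a3 b1 b2 b3 u v w p q r x y z :: "'k::field"
  assumes "u*a1+v*a2+w*a3 = 0" "u*b1+v*b2+w*b3 = 0" "u*x+v*y+w*z = 0"
   "p*a1+q*a2+r*a3 = 0" "p*b1+q*b2+r*b3 = 0"
   "(u,v,w) \<noteq> (0,0,0)"
   "(a2*b3 - a3*b2, a3*b1 - a1*b3, a1*b2 - a2*b1) \<noteq> (0,0,0)"
  shows "p*x+q*y+r*z = 0"
  using key[OF assms(1-5)] assms(6,7) by (auto simp: mult_eq_0_iff)

lemma proj_class_scale:
  fixes l a1 a2 a3 :: "'k::field"
  assumes "l \<noteq> 0"
  shows "proj_class (l*a1,l*a2,l*a3) = proj_class (a1,a2,a3)"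
proof -
  have *: "(\<exists>c. t = (c*(l*a1), c*(l*a2), c*(l*a3)) \<and> c \<noteq> 0) \<longleftrightarrow>
        (\<exists>c. t = (c*a1, c*a2, c*a3) \<and> c \<noteq> 0)" for t
  proof
    assume "\<exists>c. t = (c*(l*a1), c*(l*a2), c*(l*a3)) \<and> c \<noteq> 0"
    then obtain c where "t = (c*(l*a1), c*(l*a2), c*(l*a3))" "c \<noteq> 0" by blast
    then show "\<exists>c. t = (c*a1, c*a2, c*a3) \<and> c \<noteq> 0"
      using assms by (intro exI[of _ "c*l"]) (auto simp: algebra_simps)
  next
    assume "\<exists>c. t = (c*a1, c*a2, c*a3) \<and> c \<noteq> 0"
    then obtain c where "t = (c*a1, c*a2, c*a3)" "c \<noteq> 0" by blast
    then show "\<exists>c. t = (c*(l*a1), c*(l*a2), c*(l*a3)) \<and> c \<noteq> 0"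
      using assms by (intro exI[of _ "c/l"]) (auto simp: field_simps)
  qed
  show ?thesis unfolding proj_class_def prod.case
    by (rule set_eqI) (simp only: mem_Collect_eq *)
qed

lemma proj_class_eq:
  fixes a1 a2 a3 b1 b2 b3 :: "'k::field"
  assumes "(a1,a2,a3) \<noteq> (0,0,0)" "(b1,b2,b3) \<noteq> (0,0,0)"
    "a2*b3 = a3*b2" "a3*b1 = a1*b3" "a1*b2 = a2*b1"
  shows "proj_class (a1,a2,a3) = proj_class (b1,b2,b3)"
proof -
  obtain l where l: "l \<noteq> 0" "b1 = l*a1" "b2 = l*a2" "b3 = l*a3"
  proof (cases "a1 \<noteq> 0")
    case True
    show ?thesis
      apply (rule that[of "b1/a1"])
      using True assms by (auto simp: field_simps)
  next
    case F1: False
    show ?thesis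
    proof (cases "a2 \<noteq> 0")
      case True
      show ?thesis
        apply (rule that[of "b2/a2"])
        using True F1 assms by (auto simp: field_simps)
    next
      case False
      then have "a3 \<noteq> 0" using F1 assms by auto
      show ?thesis
        apply (rule that[of "b3/a3"])
        using \<open>a3\<noteq>0\<close> False F1 assms by (auto simp: field_simps)
    qed
  qed
  show ?thesis using proj_class_scale[OF l(1)] l by simp
qed

lemma P2_rep:
  assumes "p \<in> P2"
  obtains a1 a2 a3 where "(a1,a2,a3) \<noteq> (0,0,0)" "p = proj_class (a1,a2,a3)"
  using assms unfolding P2_def by auto

lemma self_in_class: "(a1,a2,a3) \<in> proj_class (a1,a2,a3)"
  unfolding proj_class_def by (auto intro: exI[of _ 1])

lemma line_eqn:
  assumes "proj_class (a1,a2,a3) \<in> proj_line (u,v,w)"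
  shows "u*a1+v*a2+w*a3 = 0"
  using assms self_in_class[of a1 a2 a3] unfolding proj_line_def by fastforce

lemma in_line:
  fixes a1 :: "'k::field"
  assumes "(a1,a2,a3) \<noteq> (0,0,0)" "u*a1+v*a2+w*a3 = 0"
  shows "proj_class (a1,a2,a3) \<in> proj_line (u,v,w)"
proof -
  have "proj_class (a1,a2,a3) \<in> P2" using assms(1) unfolding P2_def by blast
  moreover have "u*x+v*y+w*z = 0" if xyz: "(x,y,z) \<in> proj_class (a1,a2,a3)" for x y z
  proof -
    obtain c where "x = c*a1" "y = c*a2" "z = c*a3" using xyz unfolding proj_class_def by auto
    then have "u*x+v*y+w*z = c*(u*a1+v*a2+w*a3)" by (simp add: algebra_simps)
    then show ?thesis using assms(2) by simp
  qed
  ultimately show ?thesis unfolding proj_line_def by auto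
qed

lemma line_sub:
  fixes L L' :: "('k::field \<times> 'k \<times> 'k) set set"
  assumes "L \<in> lines_P2" "L' \<in> lines_P2" "P \<in> L" "P \<in> L'" "Q \<in> L" "Q \<in> L'" "P \<noteq> Q"
  shows "L \<subseteq> L'"
proof
  obtain u v w where n: "(u,v,w) \<noteq> (0,0,0)" "L = proj_line (u,v,w)" using assms(1) unfolding lines_P2_def by auto
  obtain p q r where m: "L' = proj_line (p,q,r)" using assms(2) unfolding lines_P2_def by auto
  have "P \<in> P2" using assms(3) n unfolding proj_line_def by auto
  then obtain a1 a2 a3 where a: "(a1,a2,a3) \<noteq> (0,0,0)" "P = proj_class (a1,a2,a3)" by (rule P2_rep)
  have "Q \<in> P2" using assms(5) n unfolding proj_line_def by auto
  then obtain b1 b2 b3 where b: "(b1,b2,b3) \<noteq> (0,0,0)" "Q = proj_class (b1,b2,b3)" by (rule P2_rep)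
  have c: "(a2*b3 - a3*b2, a3*b1 - a1*b3, a1*b2 - a2*b1) \<noteq> (0,0,0)"
  proof
    assume "(a2*b3 - a3*b2, a3*b1 - a1*b3, a1*b2 - a2*b1) = (0,0,0)"
    then have "P = Q" using a b proj_class_eq[OF a(1) b(1)] by auto
    then show False using assms(7) by simp
  qed
  fix R assume "R \<in> L"
  then have "R \<in> P2" using n unfolding proj_line_def by auto
  then obtain x y z where r: "(x,y,z) \<noteq> (0,0,0)" "R = proj_class (x,y,z)" by (rule P2_rep)
  have "p*x+q*y+r*z = 0"
    apply (rule key2[OF _ _ _ _ _ n(1) c])
    using line_eqn assms a b r n m \<open>R \<in> L\<close> by metis+
  then show "R \<in> L'" using in_line[OF r(1)] r m by simp
qed

lemma line_unique:
  fixes L L' :: "('k::field \<times> 'k \<times> 'k) set set"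
  assumes "L \<in> lines_P2" "L' \<in> lines_P2" "P \<in> L" "P \<in> L'" "Q \<in> L" "Q \<in> L'" "P \<noteq> Q"
  shows "L = L'"
  using line_sub[OF assms] line_sub[OF assms(2,1,4,3,6,5,7)] by auto
lemma sum_skip: "k < s \<Longrightarrow> (\<Sum>i<s. if i = k then 0 else 1::nat) = s - 1"
proof (induction s)
  case 0 then show ?case by simp
next
  case (Suc s)
  show ?case
  proof (cases "k = s")
    case True
    then have "(\<Sum>i<s. if i = k then 0 else 1::nat) = (\<Sum>i<s. 1)" by (intro sum.cong) auto
    then show ?thesis using True by simp
  next
    case False
    then have "k < s" using Suc.prems by simp
    then show ?thesis using Suc.IH False by simp
  qed
qed

theorem corollary2p8:
  fixes X :: "('k::alg_closed_field \<times> 'k \<times> 'k) set set" and s :: nat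
  assumes "s \<ge> 2"
    and "k_configuration X [1..<s+1]"
  shows "finite {L \<in> lines_P2. card (L \<inter> X) = s} \<and>
         card {L \<in> lines_P2. card (L \<inter> X) = s} \<le> s + 1"
proof -
  have len: "length [1..<s+1] = s" by simp
  have nth: "\<And>i. i < s \<Longrightarrow> [1..<s+1] ! i = i + 1" by (simp only: nth_upt)
  from assms(2) obtain Xs Ls where
    XP0: "X \<subseteq> P2" and
    XU0: "X = (\<Union>i < length [1..<s+1]. Xs i)" and
    XL0: "\<forall>i < length [1..<s+1]. card (Xs i) = [1..<s+1] ! i \<and> Xs i \<subseteq> Ls i \<and> Ls i \<in> lines_P2" and
    disj0: "\<forall>i < length [1..<s+1]. \<forall>j < i. Ls i \<inter> Xs j = {}"
    unfolding k_configuration_def by blast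
  have XP: "X \<subseteq> P2" using XP0 .
  have XU: "X = (\<Union>i < s. Xs i)" using XU0 unfolding len .
  have XL: "\<And>i. i < s \<Longrightarrow> card (Xs i) = i + 1 \<and> Xs i \<subseteq> Ls i \<and> Ls i \<in> lines_P2"
    using XL0 nth unfolding len by metis
  have disj: "\<And>i j. i < s \<Longrightarrow> j < i \<Longrightarrow> Ls i \<inter> Xs j = {}"
    using disj0 unfolding len by blast
  have fin: "finite (Xs i)" if "i < s" for i using XL[OF that] card.infinite by fastforce
  have XiP: "Xs i \<subseteq> P2" if "i < s" for i using XP XU that by auto
  define S where "S = {L \<in> lines_P2. card (L \<inter> X) = s}"
  obtain p1 where p1: "Xs 0 = {p1}" using XL[of 0] assms(1) by (auto simp: card_Suc_eq)
  have s0: "0 < s" "1 < s" using assms(1) by auto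
  have le1: "card (L \<inter> Xs i) \<le> 1" if L: "L \<in> lines_P2" "i < s" "L \<noteq> Ls i" for L i
  proof -
    have "\<forall>a\<in>L \<inter> Xs i. \<forall>b\<in>L \<inter> Xs i. a = b"
    proof (intro ballI, rule ccontr)
      fix a b assume ab: "a \<in> L \<inter> Xs i" "b \<in> L \<inter> Xs i" "a \<noteq> b"
      have "L = Ls i" using line_unique[of L "Ls i" a b] ab XL[OF L(2)] L(1) by auto
      then show False using L(3) by simp
    qed
    then show ?thesis using fin[OF L(2)] by (simp add: card_le_Suc0_iff_eq)
  qed
  have cardsum: "card (L \<inter> X) \<le> (\<Sum>i<s. card (L \<inter> Xs i))" for L
  proof -
    have "L \<inter> X = (\<Union>i<s. L \<inter> Xs i)" using XU by auto
    then show ?thesis using card_UN_le[of "{..<s}" "\<lambda>i. L \<inter> Xs i"] by simp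
  qed
  define A where "A = {L \<in> S. p1 \<in> L}"
  define B where "B = Ls ` {1..<s}"
  have SAB: "S \<subseteq> A \<union> B"
  proof
    fix L assume "L \<in> S"
    then have L: "L \<in> lines_P2" "card (L \<inter> X) = s" unfolding S_def by auto
    show "L \<in> A \<union> B"
    proof (cases "p1 \<in> L")
      case True then show ?thesis using \<open>L \<in> S\<close> unfolding A_def by auto
    next
      case False
      show ?thesis
      proof (rule ccontr)
        assume "L \<notin> A \<union> B"
        then have ne: "L \<noteq> Ls i" if "1 \<le> i" "i < s" for i using that unfolding B_def by auto
        have "card (L \<inter> Xs i) \<le> (if i = 0 then 0 else 1)" if "i < s" for i
        proof (cases "i = 0")
          case True then show ?thesis using p1 False by simp
        next
          case F: False then show ?thesis using le1[OF L(1) that ne] that by simp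
        qed
        then have "(\<Sum>i<s. card (L \<inter> Xs i)) \<le> (\<Sum>i<s. if i = 0 then 0 else 1::nat)"
          by (intro sum_mono) auto
        also have "\<dots> = s - 1" using sum_skip[OF s0(1)] by simp
        finally show False using cardsum[of L] L(2) s0 by simp
      qed
    qed
  qed
  have Ameet: "L \<inter> Xs 1 \<noteq> {}" if "L \<in> A" for L
  proof
    assume emp: "L \<inter> Xs 1 = {}"
    have L: "L \<in> lines_P2" "card (L \<inter> X) = s" "p1 \<in> L" using that unfolding A_def S_def by auto
    have ne: "L \<noteq> Ls i" if "1 \<le> i" "i < s" for i
      using disj[of i 0] that p1 L(3) by auto
    have "card (L \<inter> Xs i) \<le> (if i = 1 then 0 else 1)" if "i < s" for i
    proof (cases "i = 1")
      case True then show ?thesis using emp by simp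
    next
      case F: False
      show ?thesis
      proof (cases "i = 0")
        case True then show ?thesis using p1 F by (simp add: card_le_Suc0_iff_eq)
      next
        case False then show ?thesis using le1[OF L(1) that ne] that F by simp
      qed
    qed
    then have "(\<Sum>i<s. card (L \<inter> Xs i)) \<le> (\<Sum>i<s. if i = 1 then 0 else 1::nat)"
      by (intro sum_mono) auto
    also have "\<dots> = s - 1" using sum_skip[OF s0(2)] by simp
    finally show False using cardsum[of L] L(2) s0 by simp
  qed
  define g where "g L = (SOME q. q \<in> L \<inter> Xs 1)" for L
  have gin: "g L \<in> L \<inter> Xs 1" if "L \<in> A" for L
    using Ameet[OF that] unfolding g_def by (meson ex_in_conv someI_ex)
  have p1P: "p1 \<in> P2" using XiP[OF s0(1)] p1 by auto
  have p1n: "p1 \<notin> Xs 1" using disj[of 1 0] XL[OF s0(2)] p1 s0 by auto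
  have inj: "inj_on g A"
  proof
    fix L L' assume LL: "L \<in> A" "L' \<in> A" "g L = g L'"
    have "L \<in> lines_P2" "L' \<in> lines_P2" "p1 \<in> L" "p1 \<in> L'" using LL unfolding A_def S_def by auto
    moreover have "g L \<in> L" "g L \<in> L'" "g L \<noteq> p1" using gin LL p1n by force+
    ultimately show "L = L'" using line_unique[of L L' p1 "g L"] by metis
  qed
  have gA: "g ` A \<subseteq> Xs 1" using gin by auto
  have finA: "finite A" using inj_on_finite[OF inj gA fin[OF s0(2)]] .
  have cA: "card A \<le> 2" using card_inj_on_le[OF inj gA fin[OF s0(2)]] XL[OF s0(2)] by simp
  have finB: "finite B" unfolding B_def by simp
  have cB: "card B \<le> s - 1" unfolding B_def using card_image_le[of "{1..<s}" Ls] by simp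
  have finS: "finite S" using SAB finA finB finite_subset by blast
  have "card S \<le> card (A \<union> B)" using card_mono[OF _ SAB] finA finB by simp
  also have "\<dots> \<le> card A + card B" by (rule card_Un_le)
  finally have "card S \<le> s + 1" using cA cB s0 by simp
  then show ?thesis using finS unfolding S_def by simp
qed
end
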